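(* Let $(\Gamma,\omega,\Phi)$ be a classical Poincaré-invariant system with timelike future-directed four-momentum. Let $\chi$ be an SSC position observable, i.e. there is a map $f\colon\mathsf{SpHP}\times\Gamma\to V$ with values in the future-directed timelike vectors such that $\chi$ is the SSC position observable with respect to $f$. Suppose that for each $\gamma\in\Gamma$ the map $\Sigma\mapsto\chi(\Sigma)(\gamma)$ is continuous, and that $\chi$ is a centre of spin. Then $\chi=\chi^{\mathrm{NW}}$.
   Context: Minkowski spacetime: affine space $M$ over a 4-dimensional real vector space $V$ with metric $\eta$ of signature $(-,+,+,+)$, fixed orientation and time orientation, fixed origin identifying $M$ with $V$. $u\cdot v:=\eta(u,v)$, indices lowered/raised with $\eta$; $\varepsilon$ is the volume form with $\varepsilon_{0123}=+1$ in positively oriented orthonormal bases; $c>0$. $\mathsf{SpHP}$ is the set of spacelike hyperplanes, each identified with $(u,\tau)$ ($u$ future-directed unit timelike normal, $\tau\in\mathbb R$, $\Sigma=\{x:u\cdot x=-\tau\}$), topologised as a subset of (unit hyperboloid)$\times\mathbb R$. A classical Poincaré-invariant system has phase-space functions $P_\mu$ and $J_{\mu\nu}=-J_{\nu\mu}$; $m=\sqrt{-P\cdot P}/c$. A position observable is a map $\chi\colon\mathsf{SpHP}\times\Gamma\to M$ with $u_\mu\chi^\mu(u,\tau)=-\tau$ and $\partial\chi_\mu/\partial\tau=P_\mu/(-u\cdot P)$; spin tensor $S(u)_{\mu\nu}=J_{\mu\nu}-\chi_\mu(u,\tau)P_\nu+\chi_\nu(u,\tau)P_\mu$. SSC position observable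 with respect to $f$: $\chi_\mu(u,\tau)=\frac{J_{\mu\rho}f^\rho}{f\cdot P}+\frac{\tau P_\mu}{(-u\cdot P)}-\frac{J_{\lambda\rho}u^\lambda f^\rho}{(-f\cdot P)}\frac{P_\mu}{(-u\cdot P)}$ (intersection of $\Sigma$ with the line of solutions $x$ of $(J_{\mu\nu}-x_\mu P_\nu+x_\nu P_\mu)f^\nu=0$). Pauli–Lubański vector $W_\mu=-\tfrac12\varepsilon_{\mu\nu\rho\sigma}P^\nu J^{\rho\sigma}$; spin vector $s(u)=B(u)W/(mc)$ with $B^\mu{}_\nu(u)=\delta^\mu_\nu+\frac{(P^\mu/(mc)+u^\mu)(P_\nu/(mc)+u_\nu)}{1-u\cdot P/(mc)}-2\frac{u^\mu P_\nu}{mc}$. $\chi$ is a centre of spin if $s_\mu(u)=-\tfrac12\varepsilon_{\mu\nu\rho\sigma}u^\nu S^{\rho\sigma}(u)$ for all $(u,\tau)$ and phase-space points. Newton–Wigner observable $\chi^{\mathrm{NW}}$: the SSC position observable with $f=u+P/(mc)$, explicitly $\chi^{\mathrm{NW}}_\mu(u,\tau)=-\frac{J_{\mu\rho}(u^\rho+P^\rho/(mc))}{mc-u\cdot P}+\frac{\tau P_\mu}{(-u\cdot P)}-\frac{J_{\lambda\rho}u^\lambda P^\rho}{mc(mc-u\cdot P)}\frac{P_\mu}{(-u\cdot P)}$. *)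

theory Defs
  imports "HOL-Analysis.Analysis"
begin

text \<open>Minkowski space V is modelled as real^4, the standard basis being a fixed
positively oriented, time-oriented orthonormal basis (e_0 future-directed).
Vectors are stored by their contravariant components v^mu; second-rank tensors
(J, S) by their contravariant components T^{mu nu}.\<close>

definition eta :: "4 \<Rightarrow> 4 \<Rightarrow> real" where
  "eta i j = (if i = j then (if i = 0 then -1 else 1) else 0)"

definition mdot :: "real^4 \<Rightarrow> real^4 \<Rightarrow> real" where
  "mdot u v = (\<Sum>i\<in>UNIV. \<Sum>j\<in>UNIV. eta i j * u$i * v$j)"

text \<open>lowering / raising indices (eta is its own inverse)\<close>
definition low :: "real^4 \<Rightarrow> real^4" where
  "low v = (\<chi> i. \<Sum>j\<in>UNIV. eta i j * v$j)"

definition raise :: "real^4 \<Rightarrow> real^4" where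
  "raise w = (\<chi> i. \<Sum>j\<in>UNIV. eta i j * w$j)"

definition future_timelike :: "real^4 \<Rightarrow> bool" where
  "future_timelike v \<longleftrightarrow> mdot v v < 0 \<and> v$0 > 0"

text \<open>Spacelike hyperplanes Sigma = (u, tau), u on the future unit hyperboloid.\<close>
definition SpHP :: "((real^4) \<times> real) set" where
  "SpHP = {(u, \<tau>). mdot u u = -1 \<and> u$0 > 0}"

definition rows4 :: "real^4 \<Rightarrow> real^4 \<Rightarrow> real^4 \<Rightarrow> real^4 \<Rightarrow> real^4^4" where
  "rows4 a b c d = (\<chi> r. if r = 0 then a else if r = 1 then b else if r = 2 then c else d)"

text \<open>Volume form with lower indices, epsilon_{0123} = +1.\<close>
definition lc :: "4 \<Rightarrow> 4 \<Rightarrow> 4 \<Rightarrow> 4 \<Rightarrow> real" where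
  "lc m n r s = det (rows4 (axis m 1) (axis n 1) (axis r 1) (axis s 1))"

definition antisym_tensor :: "real^4^4 \<Rightarrow> bool" where
  "antisym_tensor T \<longleftrightarrow> (\<forall>m n. T$m$n = - T$n$m)"

definition mass :: "real \<Rightarrow> real^4 \<Rightarrow> real" where
  "mass c P = sqrt (- mdot P P) / c"

definition Jdot :: "real^4^4 \<Rightarrow> real^4 \<Rightarrow> real^4" where
  "Jdot J f = (\<chi> m. \<Sum>r\<in>UNIV. J$m$r * (low f)$r)"

definition jform :: "real^4^4 \<Rightarrow> real^4 \<Rightarrow> real^4 \<Rightarrow> real" where
  "jform J u f = (\<Sum>l\<in>UNIV. \<Sum>r\<in>UNIV. J$l$r * (low u)$l * (low f)$r)"

definition chi_ssc :: "real^4 \<Rightarrow> real^4^4 \<Rightarrow> real^4 \<Rightarrow> real^4 \<Rightarrow> real \<Rightarrow> real^4" where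
  "chi_ssc P J f u \<tau> =
     (1 / mdot f P) *\<^sub>R Jdot J f
     + (\<tau> / (- mdot u P)) *\<^sub>R P
     - (jform J u f / (- mdot f P) * (1 / (- mdot u P))) *\<^sub>R P"

definition chi_NW :: "real \<Rightarrow> real^4 \<Rightarrow> real^4^4 \<Rightarrow> real^4 \<Rightarrow> real \<Rightarrow> real^4" where
  "chi_NW c P J u \<tau> =
     (let mc = mass c P * c in
       - (1 / (mc - mdot u P)) *\<^sub>R Jdot J (u + (1 / mc) *\<^sub>R P)
       + (\<tau> / (- mdot u P)) *\<^sub>R P
       - (jform J u P / (mc * (mc - mdot u P)) * (1 / (- mdot u P))) *\<^sub>R P)"

definition spin_tensor :: "real^4 \<Rightarrow> real^4^4 \<Rightarrow> real^4 \<Rightarrow> real^4^4" where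
  "spin_tensor P J x = (\<chi> m n. J$m$n - x$m * P$n + x$n * P$m)"

definition PL_low :: "real^4 \<Rightarrow> real^4^4 \<Rightarrow> real^4" where
  "PL_low P J = (\<chi> m. - (1/2) * (\<Sum>n\<in>UNIV. \<Sum>r\<in>UNIV. \<Sum>s\<in>UNIV. lc m n r s * P$n * J$r$s))"

definition Bmat :: "real \<Rightarrow> real^4 \<Rightarrow> real^4 \<Rightarrow> real^4^4" where
  "Bmat c P u = (let mc = mass c P * c in
     (\<chi> m n. (if m = n then 1 else 0)
        + (P$m / mc + u$m) * ((low P)$n / mc + (low u)$n) / (1 - mdot u P / mc)
        - 2 * u$m * (low P)$n / mc))"

definition spin_vec :: "real \<Rightarrow> real^4 \<Rightarrow> real^4^4 \<Rightarrow> real^4 \<Rightarrow> real^4" where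
  "spin_vec c P J u = (1 / (mass c P * c)) *\<^sub>R (Bmat c P u *v raise (PL_low P J))"

definition dual_u :: "real^4 \<Rightarrow> real^4^4 \<Rightarrow> real^4" where
  "dual_u u S = (\<chi> m. - (1/2) * (\<Sum>n\<in>UNIV. \<Sum>r\<in>UNIV. \<Sum>s\<in>UNIV. lc m n r s * u$n * S$r$s))"

definition centre_of_spin ::
  "real \<Rightarrow> ('g \<Rightarrow> real^4) \<Rightarrow> ('g \<Rightarrow> real^4^4) \<Rightarrow> ((real^4) \<times> real \<Rightarrow> 'g \<Rightarrow> real^4) \<Rightarrow> bool" where
  "centre_of_spin c P J \<chi>' \<longleftrightarrow>
     (\<forall>(u, \<tau>)\<in>SpHP. \<forall>\<gamma>.
        low (spin_vec c (P \<gamma>) (J \<gamma>) u) = dual_u u (spin_tensor (P \<gamma>) (J \<gamma>) (\<chi>' (u, \<tau>) \<gamma>)))"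

definition is_SSC_observable ::
  "('g \<Rightarrow> real^4) \<Rightarrow> ('g \<Rightarrow> real^4^4) \<Rightarrow> ((real^4) \<times> real \<Rightarrow> 'g \<Rightarrow> real^4) \<Rightarrow> bool" where
  "is_SSC_observable P J \<chi>' \<longleftrightarrow>
     (\<exists>f :: (real^4) \<times> real \<Rightarrow> 'g \<Rightarrow> real^4.
        (\<forall>\<Sigma>\<in>SpHP. \<forall>\<gamma>. future_timelike (f \<Sigma> \<gamma>)) \<and>
        (\<forall>(u, \<tau>)\<in>SpHP. \<forall>\<gamma>. \<chi>' (u, \<tau>) \<gamma> = chi_ssc (P \<gamma>) (J \<gamma>) (f (u, \<tau>) \<gamma>) u \<tau>))"

end

theory Submission
  imports Defs
begin

lemma exhaust4:
  fixes x :: 4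
  shows "x = 0 \<or> x = 1 \<or> x = 2 \<or> x = 3"
proof (induct x)
  case (of_int z)
  then have "z = 0 \<or> z = 1 \<or> z = 2 \<or> z = 3" by fastforce
  then show ?case by auto
qed
lemma UNIV4: "(UNIV::4 set) = {0,1,2,3}"
  using exhaust4 by auto
lemma sum4: "sum f (UNIV::4 set) = f 0 + f 1 + f 2 + f 3"
  unfolding UNIV4 by (simp add: ac_simps)
lemma forall4: "(\<forall>i::4. P i) \<longleftrightarrow> P 0 \<and> P 1 \<and> P 2 \<and> P 3"
  using exhaust4 by metis

lemma rows4_nth[simp]: "rows4 a b c d $ 0 = a" "rows4 a b c d $ 1 = b"
  "rows4 a b c d $ 2 = c" "rows4 a b c d $ 3 = d"
  by (simp_all add: rows4_def)

lemma lc_0123[simp]: "lc 0 1 2 3 = 1"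
proof -
  have "rows4 (axis 0 1) (axis 1 1) (axis 2 1) (axis 3 1) = (mat 1 :: real^4^4)"
    by (simp add: vec_eq_iff forall4 axis_def mat_def)
  then show ?thesis by (simp add: lc_def)
qed

lemma det_perm_rows4:
  fixes A B :: "real^4^4"
  assumes "p permutes UNIV" "B = (\<chi> i. A $ p i)"
  shows "det B = of_int (sign p) * det A"
  using det_permute_rows[OF assms(1), of A] assms(2) by simp

lemma lc_sw12: "lc a b c d = - lc b a c d"
proof -
  have "rows4 (axis a 1) (axis b 1) (axis c 1) (axis d 1) = (\<chi> i. (rows4 (axis b 1) (axis a 1) (axis c 1) (axis d 1) :: real^4^4) $ (Transposition.transpose 0 1 i))"
    by (simp add: vec_eq_iff forall4)
  from det_perm_rows4[OF permutes_swap_id this] show ?thesis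
    by (simp add: lc_def sign_swap_id)
qed
lemma lc_sw23: "lc a b c d = - lc a c b d"
proof -
  have "rows4 (axis a 1) (axis b 1) (axis c 1) (axis d 1) = (\<chi> i. (rows4 (axis a 1) (axis c 1) (axis b 1) (axis d 1) :: real^4^4) $ (Transposition.transpose 1 2 i))"
    by (simp add: vec_eq_iff forall4)
  from det_perm_rows4[OF permutes_swap_id this] show ?thesis
    by (simp add: lc_def sign_swap_id)
qed
lemma lc_sw34: "lc a b c d = - lc a b d c"
proof -
  have "rows4 (axis a 1) (axis b 1) (axis c 1) (axis d 1) = (\<chi> i. (rows4 (axis a 1) (axis b 1) (axis d 1) (axis c 1) :: real^4^4) $ (Transposition.transpose 2 3 i))"
    by (simp add: vec_eq_iff forall4)
  from det_perm_rows4[OF permutes_swap_id this] show ?thesis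
    by (simp add: lc_def sign_swap_id)
qed

lemma lc_rep:
  "lc a a c d = 0" "lc a b a d = 0" "lc a b c a = 0" "lc a b b d = 0" "lc a b c b = 0" "lc a b c c = 0"
proof -
  let ?A = "\<lambda>a b c d. rows4 (axis a 1) (axis b 1) (axis c 1) (axis d (1::real))"
  have r: "row i (?A a b c d) = ?A a b c d $ i" for i a b c d by (simp add: row_def vec_eq_iff)
  show "lc a a c d = 0" unfolding lc_def by (rule det_identical_rows[of 0 1]) (simp_all add: r)
  show "lc a b a d = 0" unfolding lc_def by (rule det_identical_rows[of 0 2]) (simp_all add: r)
  show "lc a b c a = 0" unfolding lc_def by (rule det_identical_rows[of 0 3]) (simp_all add: r)
  show "lc a b b d = 0" unfolding lc_def by (rule det_identical_rows[of 1 2]) (simp_all add: r)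
  show "lc a b c b = 0" unfolding lc_def by (rule det_identical_rows[of 1 3]) (simp_all add: r)
  show "lc a b c c = 0" unfolding lc_def by (rule det_identical_rows[of 2 3]) (simp_all add: r)
qed
declare lc_rep[simp]
lemma lc_1023 [simp]: "lc 1 0 2 3 = -1"
  using lc_sw12[of 1 0 2 3] by simp
lemma lc_0213 [simp]: "lc 0 2 1 3 = -1"
  using lc_sw23[of 0 2 1 3] by simp
lemma lc_0132 [simp]: "lc 0 1 3 2 = -1"
  using lc_sw34[of 0 1 3 2] by simp
lemma lc_1203 [simp]: "lc 1 2 0 3 = 1"
  using lc_sw23[of 1 2 0 3] by simp
lemma lc_1032 [simp]: "lc 1 0 3 2 = 1"
  using lc_sw34[of 1 0 3 2] by simp
lemma lc_2013 [simp]: "lc 2 0 1 3 = 1"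
  using lc_sw12[of 2 0 1 3] by simp
lemma lc_0231 [simp]: "lc 0 2 3 1 = 1"
  using lc_sw34[of 0 2 3 1] by simp
lemma lc_0312 [simp]: "lc 0 3 1 2 = 1"
  using lc_sw23[of 0 3 1 2] by simp
lemma lc_2103 [simp]: "lc 2 1 0 3 = -1"
  using lc_sw12[of 2 1 0 3] by simp
lemma lc_1230 [simp]: "lc 1 2 3 0 = -1"
  using lc_sw34[of 1 2 3 0] by simp
lemma lc_1302 [simp]: "lc 1 3 0 2 = -1"
  using lc_sw23[of 1 3 0 2] by simp
lemma lc_2031 [simp]: "lc 2 0 3 1 = -1"
  using lc_sw34[of 2 0 3 1] by simp
lemma lc_0321 [simp]: "lc 0 3 2 1 = -1"
  using lc_sw23[of 0 3 2 1] by simp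
lemma lc_3012 [simp]: "lc 3 0 1 2 = -1"
  using lc_sw12[of 3 0 1 2] by simp
lemma lc_2130 [simp]: "lc 2 1 3 0 = 1"
  using lc_sw34[of 2 1 3 0] by simp
lemma lc_1320 [simp]: "lc 1 3 2 0 = 1"
  using lc_sw23[of 1 3 2 0] by simp
lemma lc_3102 [simp]: "lc 3 1 0 2 = 1"
  using lc_sw12[of 3 1 0 2] by simp
lemma lc_2301 [simp]: "lc 2 3 0 1 = 1"
  using lc_sw23[of 2 3 0 1] by simp
lemma lc_3021 [simp]: "lc 3 0 2 1 = 1"
  using lc_sw12[of 3 0 2 1] by simp
lemma lc_2310 [simp]: "lc 2 3 1 0 = -1"
  using lc_sw23[of 2 3 1 0] by simp
lemma lc_3120 [simp]: "lc 3 1 2 0 = -1"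
  using lc_sw12[of 3 1 2 0] by simp
lemma lc_3201 [simp]: "lc 3 2 0 1 = -1"
  using lc_sw12[of 3 2 0 1] by simp
lemma lc_3210 [simp]: "lc 3 2 1 0 = 1"
  using lc_sw12[of 3 2 1 0] by simp

lemma mdot_exp: "mdot u v = - u$0 * v$0 + u$1 * v$1 + u$2 * v$2 + u$3 * v$3"
  by (simp add: mdot_def sum4 eta_def)
lemma low_nth[simp]: "low v $ 0 = - v$0" "low v $ 1 = v$1" "low v $ 2 = v$2" "low v $ 3 = v$3"
  by (simp_all add: low_def sum4 eta_def)
lemma raise_nth[simp]: "raise v $ 0 = - v$0" "raise v $ 1 = v$1" "raise v $ 2 = v$2" "raise v $ 3 = v$3"
  by (simp_all add: raise_def sum4 eta_def)
lemma vec4_eq: "(x::'a^4) = y \<longleftrightarrow> x$0 = y$0 \<and> x$1 = y$1 \<and> x$2 = y$2 \<and> x$3 = y$3"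
  by (simp add: vec_eq_iff forall4)
lemma anti:
  assumes "antisym_tensor J"
  shows "J$0$0 = 0" "J$1$1 = 0" "J$2$2 = 0" "J$3$3 = 0"
    "J$1$0 = - J$0$1" "J$2$0 = - J$0$2" "J$3$0 = - J$0$3"
    "J$2$1 = - J$1$2" "J$3$1 = - J$1$3" "J$3$2 = - J$2$3"
  using assms unfolding antisym_tensor_def by (metis add.inverse_inverse equal_neg_zero)+

definition dt :: "real^4 \<Rightarrow> real^4 \<Rightarrow> real" where
  "dt a b = (\<Sum>i\<in>UNIV. a$i * b$i)"
definition Pf :: "real^4^4 \<Rightarrow> real" where
  "Pf S = S$0$1*S$2$3 - S$0$2*S$1$3 + S$0$3*S$1$2"
definition eps3 :: "real^4 \<Rightarrow> real^4 \<Rightarrow> real^4 \<Rightarrow> real^4" where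
  "eps3 a b c = (\<chi> m. \<Sum>n\<in>UNIV. \<Sum>r\<in>UNIV. \<Sum>s\<in>UNIV. lc m n r s * a$n * b$r * c$s)"
lemma dt_exp: "dt a b = a$0 * b$0 + a$1 * b$1 + a$2 * b$2 + a$3 * b$3"
  by (simp add: dt_def sum4)

lemma pf_spin:
  assumes "antisym_tensor J"
  shows "Pf (spin_tensor P J y) = Pf J + dt (PL_low P J) y"
  using anti[OF assms]
  by (simp add: Pf_def spin_tensor_def PL_low_def dt_exp sum4 algebra_simps)

lemma W_P:
  assumes "antisym_tensor J"
  shows "dt (PL_low P J) P = 0"
  using anti[OF assms]
  by (simp add: PL_low_def dt_exp sum4 algebra_simps)

lemma dual_spin:
  shows "dual_u u (spin_tensor P J y) = dual_u u J + eps3 u y P"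
  by (simp add: vec4_eq dual_u_def spin_tensor_def eps3_def sum4 algebra_simps)

lemma pf_kernel:
  assumes "antisym_tensor S" "Jdot S f = 0" "f \<noteq> 0"
  shows "Pf S = 0"
proof -
  note a = anti[OF assms(1)]
  let ?h = "Jdot S f"
  have "Pf S * f$0 = (S$2$3) * ?h$1 + (- S$1$3) * ?h$2 + (S$1$2) * ?h$3"
    "Pf S * f$1 = (S$2$3) * ?h$0 + (- S$0$3) * ?h$2 + (S$0$2) * ?h$3"
    "Pf S * f$2 = (- S$1$3) * ?h$0 + (S$0$3) * ?h$1 + (- S$0$1) * ?h$3"
    "Pf S * f$3 = (S$1$2) * ?h$0 + (- S$0$2) * ?h$1 + (S$0$1) * ?h$2"
    using a by (simp_all add: Pf_def Jdot_def sum4 algebra_simps)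
  then have "Pf S * f$0 = 0" "Pf S * f$1 = 0" "Pf S * f$2 = 0" "Pf S * f$3 = 0"
    using assms(2) by simp_all
  moreover have "f$0 \<noteq> 0 \<or> f$1 \<noteq> 0 \<or> f$2 \<noteq> 0 \<or> f$3 \<noteq> 0" using assms(3) by (simp add: vec4_eq)
  ultimately show ?thesis by auto
qed

lemma spin_anti:
  assumes "antisym_tensor J" shows "antisym_tensor (spin_tensor P J x)"
  unfolding antisym_tensor_def
proof (intro allI)
  fix m n
  from assms have h: "J$m$n = - J$n$m" unfolding antisym_tensor_def by blast
  show "spin_tensor P J x $ m $ n = - spin_tensor P J x $ n $ m"
    unfolding spin_tensor_def using h by simp
qed

lemma spin_apply: "Jdot (spin_tensor P J x) f = Jdot J f - (mdot P f) *\<^sub>R x + (mdot x f) *\<^sub>R P"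
  by (simp add: vec4_eq Jdot_def spin_tensor_def sum4 mdot_exp algebra_simps)

lemma Jdot_self: "antisym_tensor J \<Longrightarrow> mdot (Jdot J f) f = 0"
  using anti[of J] by (simp add: Jdot_def sum4 mdot_exp algebra_simps)

lemma jform_eq: "jform J u f = mdot u (Jdot J f)"
  by (simp add: jform_def Jdot_def sum4 mdot_exp algebra_simps)

lemma jform_self: "antisym_tensor J \<Longrightarrow> jform J u u = 0"
  using anti[of J] by (simp add: jform_def sum4 algebra_simps)

lemma mdot_lin:
  "mdot (a + b) v = mdot a v + mdot b v"
  "mdot v (a + b) = mdot v a + mdot v b"
  "mdot (a - b) v = mdot a v - mdot b v"
  "mdot v (a - b) = mdot v a - mdot v b"
  "mdot (t *\<^sub>R a) v = t * mdot a v"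
  "mdot v (t *\<^sub>R a) = t * mdot v a"
  "mdot (- a) v = - mdot a v"
  "mdot v (- a) = - mdot v a"
  by (simp_all add: mdot_exp algebra_simps)

lemma mdot_sym: "mdot a b = mdot b a"
  by (simp add: mdot_exp algebra_simps)

lemma Jdot_lin:
  "Jdot J (a + b) = Jdot J a + Jdot J b"
  "Jdot J (t *\<^sub>R a) = t *\<^sub>R Jdot J a"
  by (simp_all add: vec4_eq Jdot_def sum4 algebra_simps)

lemma jform_lin:
  "jform J u (a + b) = jform J u a + jform J u b"
  "jform J u (t *\<^sub>R a) = t * jform J u a"
  by (simp_all add: jform_def sum4 algebra_simps)

lemma eps3_lin:
  "eps3 u (a + b) P = eps3 u a P + eps3 u b P"
  "eps3 u (a - b) P = eps3 u a P - eps3 u b P"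
  "eps3 u (t *\<^sub>R a) P = t *\<^sub>R eps3 u a P"
  "eps3 u P P = 0"
  by (simp_all add: vec4_eq eps3_def sum4 algebra_simps)

lemma PL_spin: "antisym_tensor J \<Longrightarrow> PL_low P (spin_tensor P J x) = PL_low P J"
  using anti[of J] by (simp add: vec4_eq PL_low_def spin_tensor_def sum4 algebra_simps)

lemma kernel_W0:
  assumes "antisym_tensor S" "Jdot S f = 0" "PL_low P S = 0" "mdot f P \<noteq> 0"
  shows "S = 0"
proof -
  note a = anti[OF assms(1)]
  let ?h = "Jdot S f" and ?w = "PL_low P S"
  have "mdot f P * S$0$1 = P$1 * ?h$0 - P$0 * ?h$1 - f$3 * ?w$2 + f$2 * ?w$3"
       "mdot f P * S$0$2 = P$2 * ?h$0 - P$0 * ?h$2 + f$3 * ?w$1 - f$1 * ?w$3"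
       "mdot f P * S$0$3 = P$3 * ?h$0 - P$0 * ?h$3 - f$2 * ?w$1 + f$1 * ?w$2"
       "mdot f P * S$1$2 = P$2 * ?h$1 - P$1 * ?h$2 - f$3 * ?w$0 - f$0 * ?w$3"
       "mdot f P * S$1$3 = P$3 * ?h$1 - P$1 * ?h$3 + f$2 * ?w$0 + f$0 * ?w$2"
       "mdot f P * S$2$3 = P$3 * ?h$2 - P$2 * ?h$3 - f$1 * ?w$0 - f$0 * ?w$1"
    using a by (simp_all add: Jdot_def PL_low_def sum4 mdot_exp algebra_simps)
  then have "mdot f P * S$0$1 = 0" "mdot f P * S$0$2 = 0" "mdot f P * S$0$3 = 0"
       "mdot f P * S$1$2 = 0" "mdot f P * S$1$3 = 0" "mdot f P * S$2$3 = 0"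
    using assms(2,3) by simp_all
  then show ?thesis using assms(4) a
    by (simp add: vec4_eq)
qed

lemma contraction:
  assumes "eps3 u d P = 0" "mdot u d = 0" "mdot u u = -1"
  shows "((mdot u P)^2 + mdot P P) *\<^sub>R d = (mdot P d) *\<^sub>R ((mdot u P) *\<^sub>R u + P)"
proof -
  have
    "((mdot u P)^2 + mdot P P) * d$0 - mdot P d * (mdot u P * u$0 + P$0) = (P$2 * u$3 - P$3 * u$2) * (eps3 u d P)$1 + (- P$1 * u$3 + P$3 * u$1) * (eps3 u d P)$2 + (P$1 * u$2 - P$2 * u$1) * (eps3 u d P)$3 + (P$0 * P$1 * u$1 + P$0 * P$2 * u$2 + P$0 * P$3 * u$3 - P$1 * P$1 * u$0 - P$2 * P$2 * u$0 - P$3 * P$3 * u$0) * mdot u d + (- P$0 * P$1 * d$1 - P$0 * P$2 * d$2 - P$0 * P$3 * d$3 + P$1 * P$1 * d$0 + P$2 * P$2 * d$0 + P$3 * P$3 * d$0) * (mdot u u + 1)"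
    "((mdot u P)^2 + mdot P P) * d$1 - mdot P d * (mdot u P * u$1 + P$1) = (- P$2 * u$3 + P$3 * u$2) * (eps3 u d P)$0 + (- P$0 * u$3 + P$3 * u$0) * (eps3 u d P)$2 + (P$0 * u$2 - P$2 * u$0) * (eps3 u d P)$3 + (- P$0 * P$1 * u$0 + P$0 * P$0 * u$1 + P$1 * P$2 * u$2 + P$1 * P$3 * u$3 - P$2 * P$2 * u$1 - P$3 * P$3 * u$1) * mdot u d + (P$0 * P$1 * d$0 - P$0 * P$0 * d$1 - P$1 * P$2 * d$2 - P$1 * P$3 * d$3 + P$2 * P$2 * d$1 + P$3 * P$3 * d$1) * (mdot u u + 1)"
    "((mdot u P)^2 + mdot P P) * d$2 - mdot P d * (mdot u P * u$2 + P$2) = (P$1 * u$3 - P$3 * u$1) * (eps3 u d P)$0 + (P$0 * u$3 - P$3 * u$0) * (eps3 u d P)$1 + (- P$0 * u$1 + P$1 * u$0) * (eps3 u d P)$3 + (- P$0 * P$2 * u$0 + P$0 * P$0 * u$2 + P$1 * P$2 * u$1 - P$1 * P$1 * u$2 + P$2 * P$3 * u$3 - P$3 * P$3 * u$2) * mdot u d + (P$0 * P$2 * d$0 - P$0 * P$0 * d$2 - P$1 * P$2 * d$1 + P$1 * P$1 * d$2 - P$2 * P$3 * d$3 + P$3 * P$3 * d$2) * (mdot u u + 1)"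
    "((mdot u P)^2 + mdot P P) * d$3 - mdot P d * (mdot u P * u$3 + P$3) = (- P$1 * u$2 + P$2 * u$1) * (eps3 u d P)$0 + (- P$0 * u$2 + P$2 * u$0) * (eps3 u d P)$1 + (P$0 * u$1 - P$1 * u$0) * (eps3 u d P)$2 + (- P$0 * P$3 * u$0 + P$0 * P$0 * u$3 + P$1 * P$3 * u$1 - P$1 * P$1 * u$3 + P$2 * P$3 * u$2 - P$2 * P$2 * u$3) * mdot u d + (P$0 * P$3 * d$0 - P$0 * P$0 * d$3 - P$1 * P$3 * d$1 + P$1 * P$1 * d$3 - P$2 * P$3 * d$2 + P$2 * P$2 * d$3) * (mdot u u + 1)"
    by (simp_all add: eps3_def sum4 mdot_exp algebra_simps power2_eq_square)
  then have "((mdot u P)^2 + mdot P P) * d$0 - mdot P d * (mdot u P * u$0 + P$0) = 0" "((mdot u P)^2 + mdot P P) * d$1 - mdot P d * (mdot u P * u$1 + P$1) = 0" "((mdot u P)^2 + mdot P P) * d$2 - mdot P d * (mdot u P * u$2 + P$2) = 0" "((mdot u P)^2 + mdot P P) * d$3 - mdot P d * (mdot u P * u$3 + P$3) = 0"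
    using assms by simp_all
  then show ?thesis by (simp add: vec4_eq algebra_simps)
qed

lemma ssc_ker:
  assumes "antisym_tensor J" "mdot f P \<noteq> 0"
  shows "Jdot (spin_tensor P J (chi_ssc P J f u \<tau>)) f = 0"
proof -
  define \<beta> where "\<beta> = \<tau> / (- mdot u P) - jform J u f / (- mdot f P) * (1 / (- mdot u P))"
  have x: "chi_ssc P J f u \<tau> = (1 / mdot f P) *\<^sub>R Jdot J f + \<beta> *\<^sub>R P"
    by (simp add: chi_ssc_def \<beta>_def algebra_simps)
  have s: "mdot P f = mdot f P" by (rule mdot_sym)
  have m: "mdot (chi_ssc P J f u \<tau>) f = \<beta> * mdot f P"
    unfolding x by (simp add: mdot_lin Jdot_self[OF assms(1)] s)
  show ?thesis
    unfolding spin_apply m unfolding s x using assms(2) by (simp add: scaleR_add_right algebra_simps)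
qed

lemma ssc_plane:
  assumes "mdot u P \<noteq> 0"
  shows "mdot u (chi_ssc P J f u \<tau>) = - \<tau>"
  using assms by (simp add: chi_ssc_def mdot_lin jform_eq[symmetric] field_simps)


lemma NW_ssc:
  assumes "antisym_tensor J" "m = mass c P * c" "m > 0" "m^2 = - mdot P P" "mdot u P < 0"
  shows "chi_NW c P J u \<tau> = chi_ssc P J (u + (1/m) *\<^sub>R P) u \<tau>"
proof -
  have e1: "mdot (u + (1/m) *\<^sub>R P) P = mdot u P - m"
    using assms(3,4) by (simp add: mdot_lin field_simps power2_eq_square)
  have e2: "jform J u (u + (1/m) *\<^sub>R P) = jform J u P / m"
    by (simp add: jform_lin jform_self[OF assms(1)])
  have L: "chi_NW c P J u \<tau> = (-(1/(m - mdot u P))) *\<^sub>R Jdot J (u + (1/m) *\<^sub>R P) + (\<tau>/(-mdot u P) - jform J u P/(m*(m - mdot u P)) * (1/(-mdot u P))) *\<^sub>R P"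
    unfolding chi_NW_def Let_def assms(2)[symmetric] by (simp add: algebra_simps)
  have R: "chi_ssc P J (u + (1/m) *\<^sub>R P) u \<tau> = (1/(mdot u P - m)) *\<^sub>R Jdot J (u + (1/m) *\<^sub>R P) + (\<tau>/(-mdot u P) - jform J u P/m/(-(mdot u P - m)) * (1/(-mdot u P))) *\<^sub>R P"
    unfolding chi_ssc_def e1 e2 by (simp add: algebra_simps)
  have c1: "-(1/(m - mdot u P)) = 1/(mdot u P - m)"
    using divide_minus_right[of 1 "m - mdot u P"] by simp
  have c2: "jform J u P/(m*(m - mdot u P)) = jform J u P/m/(-(mdot u P - m))"
    by simp
  show ?thesis unfolding L R c1 c2 ..
qed

lemma Bmat_gen:
  assumes "D \<noteq> 0" "M \<noteq> 0"
  shows "(\<chi> i j. (if i = j then 1 else 0) + a$i * b$j / D - 2 * u$i * l$j / M) *v v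
     = v + (dt b v / D) *\<^sub>R a - (2 * dt l v / M) *\<^sub>R u"
  using assms by (simp add: vec4_eq matrix_vector_mult_def sum4 dt_exp field_simps)

lemma dt_low_raise: "dt (low a) (raise b) = dt a b"
  by (simp add: dt_exp)

lemma dt_sym: "dt a b = dt b a"
  by (simp add: dt_exp algebra_simps)

lemma spinvec:
  assumes "antisym_tensor J" "m = mass c P * c" "m > 0" "mdot u P < 0"
  shows "low (spin_vec c P J u) = (1/m) *\<^sub>R PL_low P J + (dt (PL_low P J) u / (m - mdot u P)) *\<^sub>R ((1/m) *\<^sub>R low P + low u)"
proof -
  define W where "W = PL_low P J"
  define a where "a = ((\<chi> i. P$i / m + u$i) :: real^4)"
  define b where "b = ((\<chi> i. (low P)$i / m + (low u)$i) :: real^4)"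
  define D where "D = 1 - mdot u P / m"
  have D: "D \<noteq> 0" using assms(3,4) unfolding D_def by (smt (verit) divide_neg_pos)
  have form: "Bmat c P u = (\<chi> i j. (if i = j then 1 else 0) + a$i * b$j / D - 2 * u$i * (low P)$j / m)"
    unfolding Bmat_def Let_def assms(2)[symmetric] a_def b_def D_def by simp
  have WP: "dt W P = 0" unfolding W_def by (rule W_P[OF assms(1)])
  have d1: "dt (low P) (raise W) = 0" using WP dt_sym[of P W] by (simp add: dt_low_raise)
  have d2a: "dt b (raise W) = dt W P / m + dt W u"
    unfolding b_def by (simp add: dt_exp add_divide_distrib algebra_simps)
  have d2: "dt b (raise W) = dt W u"
    using d2a WP by simp
  have B: "Bmat c P u *v raise W = raise W + (dt W u / D) *\<^sub>R a"
    unfolding form using Bmat_gen[OF D, of m a b u "low P" "raise W"] assms(3) d1 d2 by simp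
  have q: "dt W u / (m - mdot u P) = (1/m) * (dt W u / D)"
    using assms(3,4) D unfolding D_def by (simp add: field_simps)
  show ?thesis
    unfolding spin_vec_def W_def[symmetric] assms(2)[symmetric] B q
    by (simp add: vec4_eq a_def algebra_simps)
qed

lemma identA:
  assumes "antisym_tensor J"
  shows "-(mdot u u) *\<^sub>R PL_low P J + (dt (PL_low P J) u) *\<^sub>R low u = -(mdot u P) *\<^sub>R dual_u u J - eps3 u (Jdot J u) P"
  using anti[OF assms]
  by (simp add: vec4_eq PL_low_def dual_u_def eps3_def Jdot_def sum4 mdot_exp dt_exp algebra_simps)

lemma identB:
  assumes "antisym_tensor J"
  shows "-(mdot u P) *\<^sub>R PL_low P J + (dt (PL_low P J) u) *\<^sub>R low P = -(mdot P P) *\<^sub>R dual_u u J - eps3 u (Jdot J P) P"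
  using anti[OF assms]
  by (simp add: vec4_eq PL_low_def dual_u_def eps3_def Jdot_def sum4 mdot_exp dt_exp algebra_simps)

lemma final_scalar:
  fixes m uP W k lu lP D E1 E2 :: real
  assumes "m > 0" "uP < 0" "W + k*lu = -uP*D - E1" "-uP*W + k*lP = m^2*D - E2"
  shows "(1/m)*W + (k/(m-uP))*((1/m)*lP + lu) = D + (1/(uP-m))*(E1 + (1/m)*E2)"
proof -
  have e1: "E1 = -uP*D - W - k*lu" using assms(3) by simp
  have e2: "E2 = m^2*D + uP*W - k*lP" using assms(4) by simp
  have "m - uP \<noteq> 0" "uP - m \<noteq> 0" using assms(1,2) by auto
  then show ?thesis unfolding e1 e2 using assms(1)
    by (simp add: field_simps power2_eq_square)
qed


lemma final_vec:
  fixes W lu lP D E1 E2 :: "real^4"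
  assumes "m > 0" "uP < 0" "W + k *\<^sub>R lu = (-uP) *\<^sub>R D - E1" "(-uP) *\<^sub>R W + k *\<^sub>R lP = m^2 *\<^sub>R D - E2"
  shows "(1/m) *\<^sub>R W + (k/(m-uP)) *\<^sub>R ((1/m) *\<^sub>R lP + lu) = D + (1/(uP - m)) *\<^sub>R (E1 + (1/m) *\<^sub>R E2)"
  unfolding vec_eq_iff
proof
  fix i
  have h1: "W$i + k*lu$i = -uP*D$i - E1$i" using arg_cong[OF assms(3), of "\<lambda>v. v$i"] by simp
  have h2: "-uP*W$i + k*lP$i = m^2*D$i - E2$i" using arg_cong[OF assms(4), of "\<lambda>v. v$i"] by simp
  show "((1/m) *\<^sub>R W + (k/(m-uP)) *\<^sub>R ((1/m) *\<^sub>R lP + lu)) $ i = (D + (1/(uP - m)) *\<^sub>R (E1 + (1/m) *\<^sub>R E2)) $ i"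
    using final_scalar[OF assms(1,2) h1 h2] by simp
qed

lemma NW_centre:
  assumes "antisym_tensor J" "m = mass c P * c" "m > 0" "m^2 = - mdot P P" "mdot u u = -1" "mdot u P < 0"
  shows "low (spin_vec c P J u) = dual_u u (spin_tensor P J (chi_NW c P J u \<tau>))"
proof -
  define f0 where "f0 = u + (1/m) *\<^sub>R P"
  define \<beta> where "\<beta> = \<tau> / (- mdot u P) - jform J u f0 / (- mdot f0 P) * (1 / (- mdot u P))"
  have e1: "mdot f0 P = mdot u P - m"
    using assms(3,4) unfolding f0_def by (simp add: mdot_lin field_simps power2_eq_square)
  have x: "chi_NW c P J u \<tau> = (1/(mdot u P - m)) *\<^sub>R Jdot J f0 + \<beta> *\<^sub>R P"
    using NW_ssc[OF assms(1,2,3,4,6)] unfolding f0_def[symmetric]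
    by (simp add: chi_ssc_def \<beta>_def e1 algebra_simps)
  have dual: "dual_u u (spin_tensor P J (chi_NW c P J u \<tau>)) = dual_u u J + (1/(mdot u P - m)) *\<^sub>R (eps3 u (Jdot J u) P + (1/m) *\<^sub>R eps3 u (Jdot J P) P)"
    unfolding dual_spin x f0_def by (simp add: eps3_lin Jdot_lin scaleR_add_right)
  have A: "PL_low P J + (dt (PL_low P J) u) *\<^sub>R low u = (-(mdot u P)) *\<^sub>R dual_u u J - eps3 u (Jdot J u) P"
    using identA[OF assms(1), of u P] assms(5) by simp
  have B: "(-(mdot u P)) *\<^sub>R PL_low P J + (dt (PL_low P J) u) *\<^sub>R low P = m^2 *\<^sub>R dual_u u J - eps3 u (Jdot J P) P"
    using identB[OF assms(1), of u P] assms(4) by simp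
  show ?thesis
    unfolding spinvec[OF assms(1,2,3,6)] dual
    by (rule final_vec[OF assms(3,6) A B])
qed

lemma CS3:
  fixes a1 a2 a3 b1 b2 b3 :: real
  shows "(a1*b1+a2*b2+a3*b3)^2 \<le> (a1^2+a2^2+a3^2)*(b1^2+b2^2+b3^2)"
proof -
  have "(a1^2+a2^2+a3^2)*(b1^2+b2^2+b3^2) - (a1*b1+a2*b2+a3*b3)^2
      = (a1*b2-a2*b1)^2 + (a1*b3-a3*b1)^2 + (a2*b3-a3*b2)^2"
    by (simp add: algebra_simps power2_eq_square)
  moreover have "(a1*b2-a2*b1)^2 + (a1*b3-a3*b1)^2 + (a2*b3-a3*b2)^2 \<ge> 0" by simp
  ultimately show ?thesis by linarith
qed

lemma ft_neg:
  assumes "future_timelike f" "future_timelike P"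
  shows "mdot f P < 0"
proof -
  let ?s = "f$1*P$1 + f$2*P$2 + f$3*P$3"
  let ?A = "(f$1)^2 + (f$2)^2 + (f$3)^2" and ?B = "(P$1)^2 + (P$2)^2 + (P$3)^2"
  have f0: "f$0 > 0" and P0: "P$0 > 0" using assms unfolding future_timelike_def by auto
  have A: "?A < (f$0)^2" using assms(1) unfolding future_timelike_def by (simp add: mdot_exp power2_eq_square)
  have B: "?B < (P$0)^2" using assms(2) unfolding future_timelike_def by (simp add: mdot_exp power2_eq_square)
  have A0: "?A \<ge> 0" and B0: "?B \<ge> 0" by simp_all
  have "?A * ?B \<le> ?A * (P$0)^2" using A0 B by (simp add: mult_left_mono)
  also have "\<dots> < (f$0)^2 * (P$0)^2" using A P0 by (simp add: mult_strict_right_mono)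
  finally have "?s^2 < (f$0 * P$0)^2" using CS3[of "f$1" "P$1" "f$2" "P$2" "f$3" "P$3"]
    by (simp add: power_mult_distrib)
  then have "?s < f$0 * P$0" using f0 P0 by (simp add: power2_less_imp_less)
  then show ?thesis by (simp add: mdot_exp)
qed

lemma perp_spacelike:
  assumes "mdot w u = 0" "mdot u u = -1"
  shows "mdot w w \<ge> 0" "mdot w w = 0 \<Longrightarrow> w = 0"
proof -
  let ?s = "w$1*u$1 + w$2*u$2 + w$3*u$3"
  let ?A = "(w$1)^2 + (w$2)^2 + (w$3)^2" and ?U = "(u$1)^2 + (u$2)^2 + (u$3)^2"
  have s: "?s = w$0 * u$0" using assms(1) by (simp add: mdot_exp)
  have U: "?U = (u$0)^2 - 1" using assms(2) by (simp add: mdot_exp power2_eq_square)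
  have cs: "(w$0)^2 * (u$0)^2 \<le> ?A * ((u$0)^2 - 1)"
    using CS3[of "w$1" "u$1" "w$2" "u$2" "w$3" "u$3"] s U by (simp add: power_mult_distrib)
  have ww: "mdot w w = ?A - (w$0)^2" by (simp add: mdot_exp power2_eq_square)
  have A0: "?A \<ge> 0" by simp
  have u0: "(u$0)^2 \<ge> 1" using U by (smt (verit) zero_le_power2 add_nonneg_nonneg)
  have key: "(?A - (w$0)^2) * (u$0)^2 \<ge> ?A" using cs by (simp add: algebra_simps)
  show g: "mdot w w \<ge> 0"
  proof (rule ccontr)
    assume "\<not> mdot w w \<ge> 0"
    then have "?A - (w$0)^2 < 0" using ww by simp
    moreover have "(u$0)^2 > 0" using u0 by linarith
    ultimately have "(?A - (w$0)^2) * (u$0)^2 < 0" using mult_neg_pos by blast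
    then show False using key A0 by linarith
  qed
  assume "mdot w w = 0"
  then have "?A - (w$0)^2 = 0" using ww by simp
  then have "?A = 0" using key A0 by simp
  then have "w$1 = 0" "w$2 = 0" "w$3 = 0" by (simp_all add: add_nonneg_eq_0_iff)
  moreover have "w$0 = 0" using \<open>?A - (w$0)^2 = 0\<close> \<open>?A = 0\<close> by simp
  ultimately show "w = 0" by (simp add: vec4_eq)
qed

lemma perp_unit_bound:
  assumes "mdot a u = 0" "mdot a a = 1" "mdot u u = -1"
  shows "(a$0)^2 < (u$0)^2"
proof -
  let ?s = "a$1*u$1 + a$2*u$2 + a$3*u$3"
  let ?A = "(a$1)^2 + (a$2)^2 + (a$3)^2" and ?U = "(u$1)^2 + (u$2)^2 + (u$3)^2"
  have s: "?s = a$0 * u$0" using assms(1) by (simp add: mdot_exp)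
  have U: "?U = (u$0)^2 - 1" using assms(3) by (simp add: mdot_exp power2_eq_square)
  have A: "?A = 1 + (a$0)^2" using assms(2) by (simp add: mdot_exp power2_eq_square)
  have cs: "(a$0)^2 * (u$0)^2 \<le> (1 + (a$0)^2) * ((u$0)^2 - 1)"
    using CS3[of "a$1" "u$1" "a$2" "u$2" "a$3" "u$3"] s U A by (simp add: power_mult_distrib)
  then show ?thesis by (simp add: algebra_simps)
qed

lemma dt_lin:
  "dt a (b + c) = dt a b + dt a c"
  "dt a (b - c) = dt a b - dt a c"
  "dt a (t *\<^sub>R b) = t * dt a b"
  by (simp_all add: dt_exp algebra_simps)


lemma pointwise:
  assumes c: "c > 0" and Pt: "future_timelike P" and aJ: "antisym_tensor J"
    and uu: "mdot u u = -1" and u0: "u$0 > 0"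
    and ft: "future_timelike f"
    and cs: "low (spin_vec c P J u) = dual_u u (spin_tensor P J (chi_ssc P J f u \<tau>))"
    and good: "dt (PL_low P J) u \<noteq> 0 \<or> PL_low P J = 0"
  shows "chi_ssc P J f u \<tau> = chi_NW c P J u \<tau>"
proof -
  define m where "m = mass c P * c"
  have PP: "mdot P P < 0" using Pt by (simp add: future_timelike_def)
  have m_eq: "m = sqrt (- mdot P P)" unfolding m_def mass_def using c by simp
  have mpos: "m > 0" using PP m_eq by simp
  have m2: "m^2 = - mdot P P" using PP m_eq by simp
  have ut: "future_timelike u" using uu u0 by (simp add: future_timelike_def)
  have uP: "mdot u P < 0" by (rule ft_neg[OF ut Pt])
  have fP: "mdot f P < 0" by (rule ft_neg[OF ft Pt])
  have fnz: "f \<noteq> 0" using ft by (auto simp: future_timelike_def)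
  define f0 where "f0 = u + (1/m) *\<^sub>R P"
  have f0P: "mdot f0 P = mdot u P - m"
    using mpos m2 unfolding f0_def by (simp add: mdot_lin field_simps power2_eq_square)
  have f0nz: "f0 \<noteq> 0"
  proof
    assume "f0 = 0"
    then have "mdot f0 P = 0" by (simp add: mdot_exp)
    then show False using f0P uP mpos by simp
  qed
  define x where "x = chi_ssc P J f u \<tau>"
  define xN where "xN = chi_NW c P J u \<tau>"
  have xN': "xN = chi_ssc P J f0 u \<tau>"
    unfolding xN_def f0_def by (rule NW_ssc[OF aJ m_def mpos m2 uP])
  have kx: "Jdot (spin_tensor P J x) f = 0"
    unfolding x_def using fP by (intro ssc_ker[OF aJ]) simp
  have kN: "Jdot (spin_tensor P J xN) f0 = 0"
    unfolding xN' using f0P uP mpos by (intro ssc_ker[OF aJ]) simp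
  define d where "d = x - xN"
  have ud: "mdot u d = 0"
    unfolding d_def x_def xN' mdot_lin using ssc_plane[of u P J] uP by simp
  have eq: "dual_u u (spin_tensor P J x) = dual_u u (spin_tensor P J xN)"
    using cs NW_centre[OF aJ m_def mpos m2 uu uP, of \<tau>] unfolding x_def xN_def by simp
  have ed: "eps3 u d P = 0" using eq unfolding dual_spin d_def eps3_lin by simp
  have "d = 0"
  proof (cases "PL_low P J = 0")
    case True
    have S0: "spin_tensor P J x = 0"
      using True PL_spin[OF aJ, of P x] fP by (intro kernel_W0[OF spin_anti[OF aJ] kx]) (simp, linarith)
    have SN: "spin_tensor P J xN = 0"
      using True PL_spin[OF aJ, of P xN] f0P uP mpos by (intro kernel_W0[OF spin_anti[OF aJ] kN]) (simp, linarith)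
    have comp: "d$i * P$j - d$j * P$i = 0" for i j
    proof -
      have h1: "J$i$j - x$i * P$j + x$j * P$i = 0"
        using arg_cong[OF S0, of "\<lambda>S. S$i$j"] by (simp add: spin_tensor_def)
      have h2: "J$i$j - xN$i * P$j + xN$j * P$i = 0"
        using arg_cong[OF SN, of "\<lambda>S. S$i$j"] by (simp add: spin_tensor_def)
      have "d$i * P$j - d$j * P$i = (J$i$j - xN$i * P$j + xN$j * P$i) - (J$i$j - x$i * P$j + x$j * P$i)"
        unfolding d_def by (simp add: algebra_simps)
      then show ?thesis using h1 h2 by simp
    qed
    have P0: "P$0 > 0" using Pt by (simp add: future_timelike_def)
    have "P$0 * mdot u d - d$0 * mdot u P = u$1 * (d$1 * P$0 - d$0 * P$1) + u$2 * (d$2 * P$0 - d$0 * P$2) + u$3 * (d$3 * P$0 - d$0 * P$3)"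
      by (simp add: mdot_exp algebra_simps)
    then have "d$0 * mdot u P = 0" using comp[of 1 0] comp[of 2 0] comp[of 3 0] ud by simp
    then have d0: "d$0 = 0" using uP by simp
    have "d$1 * P$0 = 0" "d$2 * P$0 = 0" "d$3 * P$0 = 0"
      using comp[of 1 0] comp[of 2 0] comp[of 3 0] d0 by simp_all
    then show "d = 0" using d0 P0 by (simp add: vec4_eq)
  next
    case False
    with good have Wu: "dt (PL_low P J) u \<noteq> 0" by simp
    let ?W = "PL_low P J"
    have px: "Pf (spin_tensor P J x) = 0" by (rule pf_kernel[OF spin_anti[OF aJ] kx fnz])
    have pN: "Pf (spin_tensor P J xN) = 0" by (rule pf_kernel[OF spin_anti[OF aJ] kN f0nz])
    have Wd: "dt ?W d = 0" using px pN unfolding pf_spin[OF aJ] d_def dt_lin by simp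
    have WP: "dt ?W P = 0" by (rule W_P[OF aJ])
    define k where "k = (mdot u P)^2 + mdot P P"
    define w where "w = (mdot u P) *\<^sub>R u + P"
    have con: "k *\<^sub>R d = (mdot P d) *\<^sub>R w" unfolding k_def w_def by (rule contraction[OF ed ud uu])
    have Ww: "dt ?W w = mdot u P * dt ?W u" unfolding w_def dt_lin WP by simp
    have "dt ?W (k *\<^sub>R d) = k * dt ?W d" by (simp add: dt_lin)
    also have "\<dots> = 0" using Wd by simp
    finally have "dt ?W ((mdot P d) *\<^sub>R w) = 0" using con by simp
    then have "mdot P d * (mdot u P * dt ?W u) = 0" using Ww by (simp add: dt_lin)
    then have Pd: "mdot P d = 0" using uP Wu by simp
    have kd: "k *\<^sub>R d = 0" using con Pd by simp
    have wu: "mdot w u = 0" unfolding w_def using uu by (simp add: mdot_lin mdot_sym[of P u])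
    have ww: "mdot w w = k" unfolding w_def k_def using uu
      by (simp add: mdot_lin mdot_sym[of P u] power2_eq_square algebra_simps)
    have "k \<noteq> 0"
    proof
      assume "k = 0"
      then have "w = 0" using perp_spacelike(2)[OF wu uu] ww by simp
      then have "dt ?W w = 0" by (simp add: dt_exp)
      then show False using Ww uP Wu by simp
    qed
    then show "d = 0" using kd by simp
  qed
  then show ?thesis unfolding d_def x_def xN_def by simp
qed


lemma mdot_raise: "mdot (raise w) v = dt w v"
  by (simp add: mdot_exp dt_exp)

lemma NW_tendsto:
  assumes X: "X \<longlonglongrightarrow> u" and h1: "mass c P * c - mdot u P \<noteq> 0" and h2: "mdot u P \<noteq> 0"
    and h3: "mass c P * c \<noteq> 0"
  shows "(\<lambda>n. chi_NW c P J (X n) \<tau>) \<longlonglongrightarrow> chi_NW c P J u \<tau>"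
proof -
  have md: "(\<lambda>n. mdot (X n) P) \<longlonglongrightarrow> mdot u P"
    unfolding mdot_def by (intro tendsto_intros X)
  have Jd: "(\<lambda>n. Jdot J (X n + k *\<^sub>R P)) \<longlonglongrightarrow> Jdot J (u + k *\<^sub>R P)" for k
    unfolding Jdot_def low_def by (intro tendsto_intros X)
  have jf: "(\<lambda>n. jform J (X n) P) \<longlonglongrightarrow> jform J u P"
    unfolding jform_def low_def by (intro tendsto_intros X)
  show ?thesis
    unfolding chi_NW_def Let_def
    by (intro tendsto_intros md Jd jf) (use h1 h2 h3 in auto)
qed


theorem mainTheorem5:
  fixes c :: real
    and P :: "'g \<Rightarrow> real^4"
    and J :: "'g \<Rightarrow> real^4^4"
    and \<chi>' :: "(real^4) \<times> real \<Rightarrow> 'g \<Rightarrow> real^4"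
  assumes "c > 0"
    and "\<forall>\<gamma>. future_timelike (P \<gamma>)"
    and "\<forall>\<gamma>. antisym_tensor (J \<gamma>)"
    and "is_SSC_observable P J \<chi>'"
    and "\<forall>\<gamma>. continuous_on SpHP (\<lambda>\<Sigma>. \<chi>' \<Sigma> \<gamma>)"
    and "centre_of_spin c P J \<chi>'"
  shows "\<forall>(u, \<tau>)\<in>SpHP. \<forall>\<gamma>. \<chi>' (u, \<tau>) \<gamma> = chi_NW c (P \<gamma>) (J \<gamma>) u \<tau>"
proof -
  from assms(4) obtain f where
    fT: "\<forall>\<Sigma>\<in>SpHP. \<forall>\<gamma>. future_timelike (f \<Sigma> \<gamma>)" and
    fX: "\<forall>(u, \<tau>)\<in>SpHP. \<forall>\<gamma>. \<chi>' (u, \<tau>) \<gamma> = chi_ssc (P \<gamma>) (J \<gamma>) (f (u, \<tau>) \<gamma>) u \<tau>"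
    unfolding is_SSC_observable_def by blast
  have SpHP_iff: "(u, \<tau>) \<in> SpHP \<longleftrightarrow> mdot u u = -1 \<and> u$0 > 0" for u and \<tau> :: real
    by (simp add: SpHP_def)
  have good: "\<chi>' (u, \<tau>) \<gamma> = chi_NW c (P \<gamma>) (J \<gamma>) u \<tau>"
    if uS: "(u, \<tau>) \<in> SpHP" and g: "dt (PL_low (P \<gamma>) (J \<gamma>)) u \<noteq> 0 \<or> PL_low (P \<gamma>) (J \<gamma>) = 0"
    for u \<tau> \<gamma>
  proof -
    have x: "\<chi>' (u, \<tau>) \<gamma> = chi_ssc (P \<gamma>) (J \<gamma>) (f (u, \<tau>) \<gamma>) u \<tau>" using fX uS by auto
    have cs: "low (spin_vec c (P \<gamma>) (J \<gamma>) u) = dual_u u (spin_tensor (P \<gamma>) (J \<gamma>) (\<chi>' (u, \<tau>) \<gamma>))"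
      using assms(6) uS unfolding centre_of_spin_def by auto
    have ft: "future_timelike (f (u, \<tau>) \<gamma>)" using fT uS by auto
    have uu: "mdot u u = -1" "u$0 > 0" using uS SpHP_iff by auto
    show ?thesis unfolding x
      by (rule pointwise[OF assms(1) _ _ uu ft cs[unfolded x] g]) (use assms(2,3) in auto)
  qed
  have all: "\<chi>' (u, \<tau>) \<gamma> = chi_NW c (P \<gamma>) (J \<gamma>) u \<tau>" if uS: "(u, \<tau>) \<in> SpHP" for u \<tau> \<gamma>
  proof (cases "dt (PL_low (P \<gamma>) (J \<gamma>)) u \<noteq> 0 \<or> PL_low (P \<gamma>) (J \<gamma>) = 0")
    case True
    then show ?thesis using good uS by blast
  next
    case False
    define W where "W = PL_low (P \<gamma>) (J \<gamma>)"
    have Wu: "dt W u = 0" and Wnz: "W \<noteq> 0" using False unfolding W_def by auto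
    have uu: "mdot u u = -1" and u0: "u$0 > 0" using uS SpHP_iff by auto
    define Wr where "Wr = raise W"
    have Wru: "mdot Wr u = 0" unfolding Wr_def mdot_raise using Wu .
    have Wrnz: "Wr \<noteq> 0" using Wnz unfolding Wr_def by (auto simp: vec4_eq)
    have WW0: "mdot Wr Wr \<noteq> 0" using perp_spacelike(2)[OF Wru uu] Wrnz by blast
    have WW: "mdot Wr Wr > 0"
      using perp_spacelike(1)[OF Wru uu] WW0 by linarith
    define q where "q = sqrt (mdot Wr Wr)"
    have qpos: "q > 0" using WW unfolding q_def by simp
    have q2: "q^2 = mdot Wr Wr" using WW unfolding q_def by simp
    define a where "a = (1/q) *\<^sub>R Wr"
    have au: "mdot a u = 0" unfolding a_def using Wru by (simp add: mdot_lin)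
    have aa: "mdot a a = 1" unfolding a_def using q2 qpos WW by (simp add: mdot_lin power2_eq_square)
    have Wa: "dt W a = q"
    proof -
      have "dt W a = (1/q) * mdot Wr Wr" unfolding a_def dt_lin
        by (simp add: Wr_def mdot_raise)
      also have "\<dots> = (1/q) * q^2" using q2 by simp
      also have "\<dots> = q" using qpos by (simp add: power2_eq_square)
      finally show ?thesis .
    qed
    have a0: "(a$0)^2 < (u$0)^2" by (rule perp_unit_bound[OF au aa uu])
    then have a0': "\<bar>a$0\<bar> < u$0" using u0 by (metis abs_of_pos power2_less_imp_less abs_ge_zero power2_abs)
    define s where "s n = (1/2) * inverse (real (Suc n))" for n
    have s_pos: "s n > 0" and s_le: "s n \<le> 1/2" for n
      unfolding s_def by (auto simp: field_simps)
    have s_lim: "s \<longlonglongrightarrow> 0"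
      unfolding s_def by (intro tendsto_mult_right_zero LIMSEQ_inverse_real_of_nat)
    define lam where "lam n = 1 / sqrt (1 - (s n)^2)" for n
    define un where "un n = lam n *\<^sub>R (u + s n *\<^sub>R a)" for n
    have s2: "(s n)^2 < 1" for n
    proof -
      have "(s n)^2 \<le> (1/2)^2" using s_pos[of n] s_le[of n] by (intro power_mono) auto
      moreover have "(1/2::real)^2 = 1/4" by (simp add: power2_eq_square)
      ultimately show ?thesis by linarith
    qed
    have lam2: "(lam n)^2 * (1 - (s n)^2) = 1" for n
      using s2[of n] unfolding lam_def by (simp add: power_divide)
    have lampos: "lam n > 0" for n using s2[of n] unfolding lam_def by simp
    have unS: "(un n, \<tau>) \<in> SpHP" for n
    proof -
      have "mdot (un n) (un n) = (lam n)^2 * (mdot u u + 2 * s n * mdot a u + (s n)^2 * mdot a a)"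
        unfolding un_def by (simp add: mdot_lin mdot_sym[of a u] power2_eq_square algebra_simps)
      also have "\<dots> = - ((lam n)^2 * (1 - (s n)^2))" using uu au aa by (simp add: algebra_simps)
      also have "\<dots> = -1" using lam2 by simp
      finally have 1: "mdot (un n) (un n) = -1" .
      have "s n * \<bar>a$0\<bar> \<le> \<bar>a$0\<bar>" using s_pos[of n] s_le[of n]
        by (intro mult_left_le_one_le) auto
      moreover have "s n * (-\<bar>a$0\<bar>) \<le> s n * a$0"
        using s_pos[of n] by (intro mult_left_mono) auto
      ultimately have "u$0 + s n * a$0 > 0" using a0' by linarith
      then have 2: "(un n)$0 > 0" unfolding un_def using lampos[of n] by simp
      show ?thesis using 1 2 SpHP_iff by simp
    qed
    have ungood: "dt W (un n) \<noteq> 0" for n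
    proof -
      have "dt W (un n) = lam n * (dt W u + s n * dt W a)" unfolding un_def by (simp add: dt_lin)
      also have "\<dots> = lam n * s n * q" using Wu Wa by simp
      finally show ?thesis using lampos[of n] s_pos[of n] qpos by simp
    qed
    have eqn: "\<chi>' (un n, \<tau>) \<gamma> = chi_NW c (P \<gamma>) (J \<gamma>) (un n) \<tau>" for n
      using good[OF unS[of n]] ungood[of n] unfolding W_def by blast
    have lam_lim: "lam \<longlonglongrightarrow> 1"
    proof -
      have "(\<lambda>n. 1 / sqrt (1 - (s n)^2)) \<longlonglongrightarrow> 1 / sqrt (1 - 0^2)"
        by (intro tendsto_intros s_lim) simp
      then show ?thesis unfolding lam_def by simp
    qed
    have un_lim: "un \<longlonglongrightarrow> u"
    proof -
      have "un \<longlonglongrightarrow> 1 *\<^sub>R (u + 0 *\<^sub>R a)"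
        unfolding un_def[abs_def] by (intro tendsto_intros lam_lim s_lim)
      then show ?thesis by simp
    qed
    have L1: "(\<lambda>n. \<chi>' (un n, \<tau>) \<gamma>) \<longlonglongrightarrow> \<chi>' (u, \<tau>) \<gamma>"
    proof -
      have "(\<lambda>n. (un n, \<tau>)) \<longlonglongrightarrow> (u, \<tau>)" by (intro tendsto_intros un_lim)
      moreover have cont: "continuous_on SpHP (\<lambda>\<Sigma>. \<chi>' \<Sigma> \<gamma>)" using assms(5) by blast
      ultimately show ?thesis
        using cont[unfolded continuous_on_sequentially, rule_format, of "(u, \<tau>)" "\<lambda>n. (un n, \<tau>)"] uS unS
        by (simp add: comp_def)
    qed
    have Pt: "future_timelike (P \<gamma>)" using assms(2) by blast
    have ut: "future_timelike u" using uu u0 by (simp add: future_timelike_def)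
    have uP: "mdot u (P \<gamma>) < 0" by (rule ft_neg[OF ut Pt])
    have mpos: "mass c (P \<gamma>) * c > 0"
      using Pt assms(1) unfolding mass_def future_timelike_def by simp
    have L2: "(\<lambda>n. chi_NW c (P \<gamma>) (J \<gamma>) (un n) \<tau>) \<longlonglongrightarrow> chi_NW c (P \<gamma>) (J \<gamma>) u \<tau>"
      by (rule NW_tendsto[OF un_lim]) (use uP mpos in auto)
    show ?thesis using LIMSEQ_unique[OF L1] L2 eqn by simp
  qed
  show ?thesis using all by auto
qed

end
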